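(* $\mathfrak{icp}(\mathsf{null}\setminus\{\emptyset\},\subseteq)=\operatorname{add}(\mathsf{null})$.
   Context: $\mathsf{null}$ is the ideal of Lebesgue measure zero subsets of $2^\omega$, here ordered by inclusion. For a poset $(P,\le)$, $F\subseteq P$ is an incomparable family if for every $p\in P$ there is $q\in F$ with $p\not\le q$ and $q\not\le p$; $\mathfrak{icp}(P)$ is the minimal size of an incomparable family. $\operatorname{add}(\mathsf{null})$ is the minimal size of a family of null sets whose union is not null. *)

theory Defs
  imports "HOL-Probability.Probability" "HOL-Library.Equipollence"
begin

text \<open>The Cantor space 2^omega is the type nat => bool; Lebesgue (coin-flipping)
  measure is the countable product of fair Bernoulli measures.\<close>

definition cantor_measure :: "(nat \<Rightarrow> bool) measure" where
  "cantor_measure = (\<Pi>\<^sub>M i\<in>(UNIV::nat set). measure_pmf (bernoulli_pmf (1/2)))"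

definition null_ideal :: "(nat \<Rightarrow> bool) set set" where
  "null_ideal = {A. \<exists>N\<in>null_sets cantor_measure. A \<subseteq> N}"

definition incomparable_family :: "('a \<Rightarrow> 'a \<Rightarrow> bool) \<Rightarrow> 'a set \<Rightarrow> 'a set \<Rightarrow> bool" where
  "incomparable_family le P F \<longleftrightarrow> F \<subseteq> P \<and>
     (\<forall>p\<in>P. \<exists>q\<in>F. \<not> le p q \<and> \<not> le q p)"

definition add_null_family :: "(nat \<Rightarrow> bool) set set \<Rightarrow> bool" where
  "add_null_family G \<longleftrightarrow> G \<subseteq> null_ideal \<and> \<Union>G \<notin> null_ideal"

end

theory Submission
  imports Defs
begin

unbundle cardinal_syntax

abbreviation "BM \<equiv> (\<lambda>_::nat. measure_pmf (bernoulli_pmf (1/2)))"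

lemma cantor_prob: "prob_space cantor_measure"
  unfolding cantor_measure_def by (intro prob_space_PiM) (simp add: prob_space_measure_pmf)

lemma cantor_space: "space cantor_measure = UNIV"
  unfolding cantor_measure_def by (auto simp: space_PiM)

definition cyl :: "(nat \<Rightarrow> bool) \<Rightarrow> nat \<Rightarrow> (nat \<Rightarrow> bool) set" where
  "cyl x n = prod_emb UNIV BM {..<n} (\<Pi>\<^sub>E i\<in>{..<n}. {x i})"

lemma cyl_sets: "cyl x n \<in> sets cantor_measure"
  unfolding cyl_def cantor_measure_def by (intro sets_PiM_I) auto

lemma cyl_mem: "x \<in> cyl x n"
  unfolding cyl_def by (auto simp: prod_emb_def)

lemma cyl_emeasure: "emeasure cantor_measure (cyl x n) = ennreal ((1/2)^n)"
proof -
  have "emeasure cantor_measure (cyl x n) = (\<Prod>i\<in>{..<n}. emeasure (BM i) {x i})"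
    unfolding cyl_def cantor_measure_def
    by (intro emeasure_PiM_emb) (auto simp: prob_space_measure_pmf)
  also have "\<dots> = (\<Prod>i\<in>{..<n}. ennreal (1/2))"
    by (intro prod.cong refl) (simp add: emeasure_pmf_single)
  also have "\<dots> = ennreal (1/2) ^ n"
    by (simp only: prod_constant card_lessThan)
  also have "\<dots> = ennreal ((1/2)^n)"
    by (simp only: ennreal_power)
  finally show ?thesis .
qed

lemma singleton_null: "{x} \<in> null_ideal"
proof -
  interpret P: prob_space cantor_measure by (rule cantor_prob)
  define N where "N = (\<Inter>n. cyl x n)"
  have Ns: "N \<in> sets cantor_measure" unfolding N_def using cyl_sets by auto
  have le: "measure cantor_measure N \<le> (1/2)^n" for n
  proof -
    have "measure cantor_measure N \<le> measure cantor_measure (cyl x n)"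
      by (intro P.finite_measure_mono) (auto simp: N_def cyl_sets)
    also have "\<dots> = (1/2)^n"
      using cyl_emeasure[of x n] by (simp add: P.emeasure_eq_measure)
    finally show ?thesis .
  qed
  have "(\<lambda>n. (1/2::real)^n) \<longlonglongrightarrow> 0" by (intro LIMSEQ_power_zero) auto
  hence "measure cantor_measure N \<le> 0" by (rule LIMSEQ_le_const) (use le in auto)
  hence "measure cantor_measure N = 0" by (simp add: antisym)
  hence "N \<in> null_sets cantor_measure" using Ns by (simp add: P.emeasure_eq_measure null_sets_def)
  moreover have "{x} \<subseteq> N" by (auto simp: N_def cyl_mem)
  ultimately show ?thesis unfolding null_ideal_def by auto
qed

lemma UNIV_not_null: "UNIV \<notin> null_ideal"
proof
  interpret P: prob_space cantor_measure by (rule cantor_prob)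
  assume "UNIV \<in> null_ideal"
  then obtain N where N: "N \<in> null_sets cantor_measure" "UNIV \<subseteq> N" unfolding null_ideal_def by auto
  hence "N = space cantor_measure" by (auto simp: cantor_space)
  hence "emeasure cantor_measure N = 1" by (simp add: P.emeasure_space_1)
  with null_setsD1[OF N(1)] show False by simp
qed

lemma null_ideal_subset: "A \<in> null_ideal \<Longrightarrow> B \<subseteq> A \<Longrightarrow> B \<in> null_ideal"
  unfolding null_ideal_def by blast

lemma null_ideal_Un: "A \<in> null_ideal \<Longrightarrow> B \<in> null_ideal \<Longrightarrow> A \<union> B \<in> null_ideal"
proof -
  assume "A \<in> null_ideal" "B \<in> null_ideal"
  then obtain N1 N2 where "N1 \<in> null_sets cantor_measure" "A \<subseteq> N1"
     "N2 \<in> null_sets cantor_measure" "B \<subseteq> N2" unfolding null_ideal_def by auto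
  then show ?thesis unfolding null_ideal_def by (intro CollectI bexI[of _ "N1 \<union> N2"]) auto
qed

lemma null_ideal_finite_Union: "finite G \<Longrightarrow> G \<subseteq> null_ideal \<Longrightarrow> \<Union>G \<in> null_ideal"
proof (induction G rule: finite_induct)
  case empty then show ?case unfolding null_ideal_def by auto
next
  case (insert A G) then show ?case using null_ideal_Un by auto
qed


lemma incomp_imp_add:
  assumes "incomparable_family (\<subseteq>) (null_ideal - {{}}) F"
  shows "add_null_family F"
proof -
  have F: "F \<subseteq> null_ideal" and inc: "\<And>p. p \<in> null_ideal - {{}} \<Longrightarrow> \<exists>q\<in>F. \<not> p \<subseteq> q \<and> \<not> q \<subseteq> p"
    using assms unfolding incomparable_family_def by auto
  have "\<Union>F \<notin> null_ideal"
  proof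
    assume U: "\<Union>F \<in> null_ideal"
    define p where "p = \<Union>F \<union> {undefined}"
    have "p \<in> null_ideal - {{}}" unfolding p_def using null_ideal_Un[OF U singleton_null] by auto
    then obtain q where "q \<in> F" "\<not> q \<subseteq> p" using inc by blast
    then show False unfolding p_def by auto
  qed
  with F show ?thesis unfolding add_null_family_def by auto
qed

lemma add_imp_incomp:
  assumes "add_null_family G"
  shows "\<exists>F. incomparable_family (\<subseteq>) (null_ideal - {{}}) F \<and> F \<lesssim> G"
proof -
  have G: "G \<subseteq> null_ideal" and U: "\<Union>G \<notin> null_ideal"
    using assms unfolding add_null_family_def by auto
  have inf: "infinite G" using G U null_ideal_finite_Union by blast
  define f where "f = (\<lambda>(g::(nat\<Rightarrow>bool) set, n::nat, b::bool). g \<inter> {y. y n = b})"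
  define F where "F = f ` (G \<times> UNIV) - {{}}"
  have Fsub: "F \<subseteq> null_ideal - {{}}"
    unfolding F_def f_def using G null_ideal_subset by fastforce
  have inc: "\<exists>q\<in>F. \<not> p \<subseteq> q \<and> \<not> q \<subseteq> p" if p: "p \<in> null_ideal - {{}}" for p
  proof -
    from p obtain x where x: "x \<in> p" by auto
    have "\<exists>g\<in>G. \<exists>n. \<not> (g \<inter> {y. y n = (\<not> x n)} \<subseteq> p)"
    proof (rule ccontr)
      assume "\<not> ?thesis"
      hence H: "\<And>g n. g \<in> G \<Longrightarrow> g \<inter> {y. y n = (\<not> x n)} \<subseteq> p" by blast
      have "\<Union>G \<subseteq> p"
      proof
        fix y assume "y \<in> \<Union>G"
        then obtain g where g: "g \<in> G" "y \<in> g" by auto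
        show "y \<in> p"
        proof (cases "y = x")
          case True then show ?thesis using x by simp
        next
          case False
          then obtain n where "y n \<noteq> x n" by auto
          hence "y \<in> g \<inter> {y. y n = (\<not> x n)}" using g by auto
          then show ?thesis using H[OF g(1)] by blast
        qed
      qed
      with p U null_ideal_subset show False by blast
    qed
    then obtain g n where g: "g \<in> G" and nq: "\<not> (g \<inter> {y. y n = (\<not> x n)} \<subseteq> p)" by blast
    define q where "q = g \<inter> {y. y n = (\<not> x n)}"
    have "q = f (g, n, \<not> x n)" unfolding q_def f_def by simp
    moreover have "q \<noteq> {}" using nq unfolding q_def by auto
    ultimately have "q \<in> F" unfolding F_def using g by auto
    moreover have "\<not> p \<subseteq> q" using x unfolding q_def by auto
    moreover have "\<not> q \<subseteq> p" using nq unfolding q_def by auto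
    ultimately show ?thesis by blast
  qed
  have "F \<lesssim> G \<times> (UNIV :: (nat \<times> bool) set)"
    unfolding F_def by (rule subset_image_lepoll) auto
  also have "G \<times> (UNIV :: (nat \<times> bool) set) \<lesssim> G"
  proof -
    have "(UNIV :: (nat \<times> bool) set) \<lesssim> (UNIV :: nat set)"
      unfolding lepoll_def by (intro exI[of _ "to_nat"]) (auto intro: inj_on_subset[OF inj_to_nat])
    also have "(UNIV :: nat set) \<lesssim> G" using inf infinite_le_lepoll by blast
    finally have "|UNIV :: (nat \<times> bool) set| \<le>o |G|"
      by (simp add: lepoll_def card_of_ordLeq)
    hence "|G \<times> (UNIV :: (nat \<times> bool) set)| =o |G|"
      using card_of_Times_infinite[OF inf] by blast
    thus ?thesis
      by (simp add: lepoll_def card_of_ordLeq ordIso_iff_ordLeq)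
  qed
  finally show ?thesis using Fsub inc unfolding incomparable_family_def by blast
qed

lemma exists_min_lepoll:
  fixes S :: "'a set set"
  assumes "S \<noteq> {}"
  shows "\<exists>A\<in>S. \<forall>B\<in>S. A \<lesssim> B"
proof -
  obtain r where r: "r \<in> card_of ` S" "\<forall>r'\<in>card_of ` S. r \<le>o r'"
    using exists_minim_Well_order[of "card_of ` S"] assms card_of_Well_order by blast
  then obtain A where "A \<in> S" "r = |A|" by auto
  with r show ?thesis by (auto simp: lepoll_def card_of_ordLeq[symmetric])
qed

theorem mainTheorem10:
  shows "\<exists>F G.
     incomparable_family (\<subseteq>) (null_ideal - {{}}) F \<and> add_null_family G \<and>
     F \<approx> G \<and>
     (\<forall>F'. incomparable_family (\<subseteq>) (null_ideal - {{}}) F' \<longrightarrow> F \<lesssim> F') \<and>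
     (\<forall>G'. add_null_family G' \<longrightarrow> G \<lesssim> G')"
proof -
  have "add_null_family (range (\<lambda>x. {x}))"
    unfolding add_null_family_def using singleton_null UNIV_not_null by auto
  then obtain F1 where "incomparable_family (\<subseteq>) (null_ideal - {{}}) F1"
    using add_imp_incomp by blast
  then obtain F where F: "incomparable_family (\<subseteq>) (null_ideal - {{}}) F"
    and Fmin: "\<forall>F'. incomparable_family (\<subseteq>) (null_ideal - {{}}) F' \<longrightarrow> F \<lesssim> F'"
    using exists_min_lepoll[of "{F. incomparable_family (\<subseteq>) (null_ideal - {{}}) F}"] by blast
  obtain G where G: "add_null_family G" and Gmin: "\<forall>G'. add_null_family G' \<longrightarrow> G \<lesssim> G'"
    using exists_min_lepoll[of "{G. add_null_family G}"] incomp_imp_add[OF F] by blast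
  obtain F2 where F2: "incomparable_family (\<subseteq>) (null_ideal - {{}}) F2" "F2 \<lesssim> G"
    using add_imp_incomp[OF G] by blast
  have "F \<lesssim> G" using Fmin F2 lepoll_trans by blast
  moreover have "G \<lesssim> F" using Gmin incomp_imp_add[OF F] by blast
  ultimately have "F \<approx> G" by (rule lepoll_antisym)
  with F G Fmin Gmin show ?thesis by blast
qed

end
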